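(* Let $m\ge 0$ and $n\ge1$. Then $\mathsf{Perm}_n(m)=\bigsqcup_{\sigma\in\Sigma(m)}\mathcal R^{\mathsf O}_n(\sigma)$ and $\mathsf{Even}_n(m)=\mathcal R^{\mathsf O}_n(\tau)=\mathcal R^{\mathsf{Sp}}_n(\pi)$, where $\tau=s_2s_4s_6\cdots s_{2m}\in I_\mathbb{Z}$ and $\pi\in I^{\mathsf{fpf}}_\mathbb{Z}$ is the involution with $\pi(i)=1_{\mathsf{fpf}}(i)$ for all $i\notin[2m]$ which maps $i\mapsto i+2$ if $i\in\{1,2m-2\}$, $i\mapsto i-2$ if $i\in\{3,2m\}$, $i\mapsto i+3$ if $i$ is even with $1<i<2m-2$, and $i\mapsto i-3$ if $i$ is odd with $3<i<2m$. Moreover, the abstract $\mathfrak q_n$-crystal structures on $\mathcal R^{\mathsf O}_n(\tau)$ and $\mathcal R^{\mathsf{Sp}}_n(\pi)$ coincide.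
   Context: $S_\mathbb{Z}$: finitely supported permutations of $\mathbb{Z}$, $s_i=(i,i+1)$, $I_\mathbb{Z}$ the involutions, $1_{\mathsf{fpf}}:i\mapsto i-(-1)^i$, $I^{\mathsf{fpf}}_\mathbb{Z}$ its conjugacy class. $\pi\rtimes s_i=s_i\pi s_i$ if $\pi s_i\ne s_i\pi$ and $\pi s_i$ otherwise; $i_1\cdots i_l$ is an involution word for $\pi\in I_\mathbb{Z}$ if with $z_0=1$, $z_j=z_{j-1}\rtimes s_{i_j}$, no $i_j$ is a descent ($z(i)>z(i+1)$) of $z_{j-1}$ and $z_l=\pi$. An fpf-involution word for $\pi\in I^{\mathsf{fpf}}_\mathbb{Z}$ is a minimal-length $i_1\cdots i_l$ with $\pi=s_{i_l}\cdots s_{i_1}1_{\mathsf{fpf}}s_{i_1}\cdots s_{i_l}$. $\mathcal R^{\mathsf O}_n(\sigma)$ (resp. $\mathcal R^{\mathsf{Sp}}_n(\pi)$) is the set of $n$-tuples $(w^1,\dots,w^n)$ of strictly increasing, possibly empty words whose concatenation is an involution word for $\sigma$ (resp. fpf-involution word for $\pi$). Crystal structures: $\mathrm{wt}(w)=(\ell(w^1),\dots,\ell(w^n))$; for increasing $a,b$, $\mathsf{pair}(a,b)$ pairs letters $b_j$ of $b$, taken from largest to smallest, with the smallest unpaired $a_i>b_j$ of $a$ when one exists; $f_i(w)$ ($i\in[n-1]$) is $0$ if all letters of $w^i$ are paired in $\mathsf{pair}(w^i,w^{i+1})$, else removes the largest unpaired $x$ from $w^i$ and adds to $w^{i+1}$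 the smallest $y\ge x$ not in $w^{i+1}$; $e_i(w)$ is $0$ if all letters of $w^{i+1}$ are paired, else removes the smallest unpaired $y$ of $w^{i+1}$ and adds to $w^i$ the largest $x\le y$ not in $w^i$. On $\mathcal R^{\mathsf O}_n(\sigma)$: $f_{\bar1}(w)$ moves the first letter $x$ of $w^1$ to the front of $w^2$ if $w^1\ne\emptyset$ and $x$ is less than every letter of $w^2$, else $0$; $e_{\bar1}(w)$ moves the first letter $x$ of $w^2$ to $w^1$ if $w^2\ne\emptyset$ and $x$ is less than every letter of $w^1$, else $0$. On $\mathcal R^{\mathsf{Sp}}_n(\pi)$: $f_{\bar1}(w)=0$ if $w^1=\emptyset$ or $\min w^2\le\min w^1$; else with $x=\min w^1$: if $x+1\notin w^1$ move $x$ to $w^2$, else remove $x+1$ from $w^1$ and add $x-1$ to the start of $w^2$; $e_{\bar1}(w)=0$ if $w^2=\emptyset$ or $\min w^1\le\min w^2$; else with $x=\min w^2$: if $x$ is even move $x$ to $w^1$, else remove $x$ from $w^2$ and add $x+2$ to $w^1$ (empty words have minimum $+\infty$). $\mathsf{Perm}(m)$ is the set of words that are permutations of $1,2,\dots,m$ (each appearing once), and $\mathsf{Perm}_n(m)$ the set of $n$-tuples of strictly increasing possibly empty words whose concatenation lies in $\mathsf{Perm}(m)$. $\mathsf{Even}(m)$ is the set of permutations of $2,4,\dots,2m$ and $\mathsf{Even}_n(m)$ the analogous set of $n$-fold increasing factorizations. $\Sigma(m)$ is the set of $\sigma\in I_\mathbb{Z}$ of the form $\sigma=(1,m)$ or $\sigma=(1,i_1)(i_1-1,i_2)(i_2-1,i_3)\cdots(i_k-1,m)$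 for some $1<i_1-1<i_1<i_2-1<i_2<\dots<i_k-1<i_k<m$. *)

theory Defs
  imports Main
begin

text \<open>Permutations of Z are represented as functions int => int.
  Products are compositions: (p q)(x) = p (q x).\<close>

definition fin_perm :: "(int \<Rightarrow> int) \<Rightarrow> bool" where
  "fin_perm w \<longleftrightarrow> bij w \<and> finite {i. w i \<noteq> i}"

definition transp :: "int \<Rightarrow> int \<Rightarrow> int \<Rightarrow> int" where
  "transp a b = (\<lambda>x. if x = a then b else if x = b then a else x)"

definition s :: "int \<Rightarrow> int \<Rightarrow> int" where
  "s i = transp i (i + 1)"

definition one_fpf :: "int \<Rightarrow> int" where
  "one_fpf i = (if even i then i - 1 else i + 1)"

definition invols :: "(int \<Rightarrow> int) set" where
  "invols = {z. fin_perm z \<and> z \<circ> z = id}"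

definition fpf_invols :: "(int \<Rightarrow> int) set" where
  "fpf_invols = {p. \<exists>w. fin_perm w \<and> p = w \<circ> one_fpf \<circ> inv w}"

definition rtimes :: "(int \<Rightarrow> int) \<Rightarrow> int \<Rightarrow> (int \<Rightarrow> int)" where
  "rtimes z i = (if z \<circ> s i \<noteq> s i \<circ> z then s i \<circ> z \<circ> s i else z \<circ> s i)"

fun iw_run :: "(int \<Rightarrow> int) \<Rightarrow> int list \<Rightarrow> (int \<Rightarrow> int) option" where
  "iw_run z [] = Some z"
| "iw_run z (i # is) = (if z i > z (i + 1) then None else iw_run (rtimes z i) is)"

definition is_inv_word :: "(int \<Rightarrow> int) \<Rightarrow> int list \<Rightarrow> bool" where
  "is_inv_word p a \<longleftrightarrow> iw_run id a = Some p"

definition fpf_act :: "int list \<Rightarrow> (int \<Rightarrow> int)" where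
  "fpf_act a = foldl (\<lambda>z i. s i \<circ> z \<circ> s i) one_fpf a"

definition is_fpf_word :: "(int \<Rightarrow> int) \<Rightarrow> int list \<Rightarrow> bool" where
  "is_fpf_word p a \<longleftrightarrow> fpf_act a = p \<and> (\<forall>b. fpf_act b = p \<longrightarrow> length a \<le> length b)"

definition incr_fact :: "nat \<Rightarrow> int list list \<Rightarrow> bool" where
  "incr_fact n ws \<longleftrightarrow> length ws = n \<and> (\<forall>w \<in> set ws. sorted_wrt (<) w)"

definition RO :: "nat \<Rightarrow> (int \<Rightarrow> int) \<Rightarrow> int list list set" where
  "RO n \<sigma> = {ws. incr_fact n ws \<and> is_inv_word \<sigma> (concat ws)}"

definition RSp :: "nat \<Rightarrow> (int \<Rightarrow> int) \<Rightarrow> int list list set" where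
  "RSp n \<pi> = {ws. incr_fact n ws \<and> is_fpf_word \<pi> (concat ws)}"

definition PermN :: "nat \<Rightarrow> nat \<Rightarrow> int list list set" where
  "PermN n m = {ws. incr_fact n ws \<and> distinct (concat ws) \<and> set (concat ws) = {1..int m}}"

definition EvenN :: "nat \<Rightarrow> nat \<Rightarrow> int list list set" where
  "EvenN n m = {ws. incr_fact n ws \<and> distinct (concat ws)
                    \<and> set (concat ws) = (\<lambda>k. 2 * k) ` {1..int m}}"

text \<open>Sigma(M) exactly as in the paper, with endpoint M:
  (1,M), or (1,i_1)(i_1-1,i_2)...(i_k-1,M) with
  1 < i_1-1 < i_1 < i_2-1 < i_2 < ... < i_k-1 < i_k < M, k >= 1.\<close>
definition chain_perm :: "int list \<Rightarrow> int \<Rightarrow> (int \<Rightarrow> int)" where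
  "chain_perm is M = foldr (\<lambda>(a, b) f. transp a b \<circ> f)
                           (zip (1 # map (\<lambda>i. i - 1) is) (is @ [M])) id"

definition Sigma_set :: "int \<Rightarrow> (int \<Rightarrow> int) set" where
  "Sigma_set M = {transp 1 M} \<union>
     {chain_perm is M | is. is \<noteq> [] \<and>
        sorted_wrt (<) (1 # concat (map (\<lambda>i. [i - 1, i]) is) @ [M])}"

definition tau :: "nat \<Rightarrow> int \<Rightarrow> int" where
  "tau m = foldr (\<lambda>k f. s (2 * k) \<circ> f) [1..int m] id"

text \<open>The description of pi from the paper, with parameter M in the role of m.\<close>
definition pi_cond :: "int \<Rightarrow> (int \<Rightarrow> int) \<Rightarrow> bool" where
  "pi_cond M p \<longleftrightarrow>
     (\<forall>i. i \<notin> {1..2 * M} \<longrightarrow> p i = one_fpf i)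
   \<and> (\<forall>i \<in> {1..2 * M}. i \<in> {1, 2 * M - 2} \<longrightarrow> p i = i + 2)
   \<and> (\<forall>i \<in> {1..2 * M}. i \<in> {3, 2 * M} \<longrightarrow> p i = i - 2)
   \<and> (\<forall>i. even i \<and> 1 < i \<and> i < 2 * M - 2 \<longrightarrow> p i = i + 3)
   \<and> (\<forall>i. odd i \<and> 3 < i \<and> i < 2 * M \<longrightarrow> p i = i - 3)"

section \<open>The queer operators f_{bar 1}, e_{bar 1} (None encodes 0)\<close>

definition fbar1_O :: "int list list \<Rightarrow> int list list option" where
  "fbar1_O ws = (let w1 = ws ! 0; w2 = ws ! 1 in
     if w1 \<noteq> [] \<and> (\<forall>y \<in> set w2. hd w1 < y)
     then Some (ws[0 := tl w1, 1 := hd w1 # w2]) else None)"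

definition ebar1_O :: "int list list \<Rightarrow> int list list option" where
  "ebar1_O ws = (let w1 = ws ! 0; w2 = ws ! 1 in
     if w2 \<noteq> [] \<and> (\<forall>y \<in> set w1. hd w2 < y)
     then Some (ws[0 := hd w2 # w1, 1 := tl w2]) else None)"

text \<open>For strictly increasing words the minimum is the head; empty words have
  minimum +infinity.\<close>
definition fbar1_Sp :: "int list list \<Rightarrow> int list list option" where
  "fbar1_Sp ws = (let w1 = ws ! 0; w2 = ws ! 1 in
     if w1 = [] \<or> (w2 \<noteq> [] \<and> hd w2 \<le> hd w1) then None
     else (let x = hd w1 in
       if x + 1 \<notin> set w1 then Some (ws[0 := tl w1, 1 := x # w2])
       else Some (ws[0 := removeAll (x + 1) w1, 1 := (x - 1) # w2])))"

definition ebar1_Sp :: "int list list \<Rightarrow> int list list option" where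
  "ebar1_Sp ws = (let w1 = ws ! 0; w2 = ws ! 1 in
     if w2 = [] \<or> (w1 \<noteq> [] \<and> hd w1 \<le> hd w2) then None
     else (let x = hd w2 in
       if even x then Some (ws[0 := insort x w1, 1 := tl w2])
       else Some (ws[0 := insort (x + 2) w1, 1 := tl w2])))"

end

theory Submission
  imports Defs
begin

lemma s_apply: "s i x = (if x = i then i+1 else if x = i+1 then i else x)"
  by (simp add: s_def transp_def)
lemma transp_apply: "transp a b x = (if x = a then b else if x = b then a else x)"
  by (simp add: transp_def)
lemma s_s[simp]: "s i (s i x) = x" by (simp add: s_apply)
lemma s_comp_s: "s i \<circ> s i = id" by (auto simp: fun_eq_iff)
lemma transp_same: "transp a a = id" by (auto simp: fun_eq_iff transp_apply)

fun v :: "int \<Rightarrow> int list \<Rightarrow> int \<Rightarrow> bool" where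
  "v a [] c = (a < c)"
| "v a (j # r) c = (a + 2 \<le> j \<and> v j r c)"

fun gch :: "int \<Rightarrow> int list \<Rightarrow> int \<Rightarrow> int \<Rightarrow> int" where
  "gch a [] c = transp a c"
| "gch a (j # r) c = transp a j \<circ> gch (j - 1) r c"

lemma v_lt: "v a is c \<Longrightarrow> a < c"
proof (induction "is" arbitrary: a)
  case (Cons j r)
  then have "j < c" by auto
  then show ?case using Cons.prems by auto
qed auto

lemma v_mono_start: "v a r c \<Longrightarrow> a' \<le> a \<Longrightarrow> v a' r c"
  by (cases r) auto

lemma v_mono_end: "v a r c \<Longrightarrow> c \<le> c' \<Longrightarrow> v a r c'"
  by (induction r arbitrary: a) auto

lemma v_tail: "v a (j # r) c \<Longrightarrow> v (j - 1) r c"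
  by (auto intro: v_mono_start)

lemma g_fix: "v a is c \<Longrightarrow> x < a \<or> c < x \<Longrightarrow> gch a is c x = x"
proof (induction "is" arbitrary: a)
  case Nil then show ?case by (auto simp: transp_apply)
next
  case (Cons j r)
  have v1: "v (j - 1) r c" using Cons.prems v_tail by blast
  have jc: "j < c" "a + 2 \<le> j" using Cons.prems v_lt by auto
  have "gch (j - 1) r c x = x" using Cons.IH[OF v1] Cons.prems jc by auto
  then show ?case using Cons.prems jc by (auto simp: transp_apply)
qed

lemma g_range: "v a is c \<Longrightarrow> a \<le> x \<Longrightarrow> x \<le> c \<Longrightarrow> a \<le> gch a is c x \<and> gch a is c x \<le> c"
proof (induction "is" arbitrary: a)
  case Nil then show ?case by (auto simp: transp_apply)
next
  case (Cons j r)
  have v1: "v (j - 1) r c" using Cons.prems v_tail by blast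
  have jc: "j < c" "a + 2 \<le> j" using Cons.prems v_lt by auto
  show ?case
  proof (cases "x < j - 1")
    case True
    then have "gch (j - 1) r c x = x" using g_fix[OF v1] by auto
    then show ?thesis using Cons.prems jc by (auto simp: transp_apply)
  next
    case False
    then have "j - 1 \<le> gch (j - 1) r c x \<and> gch (j - 1) r c x \<le> c" using Cons v1 by auto
    then show ?thesis using Cons.prems jc by (auto simp: transp_apply)
  qed
qed

lemma g_j: "v j r c \<Longrightarrow> gch (j - 1) r c j = j"
proof (cases r)
  case Nil
  assume "v j r c" then show ?thesis using Nil by (auto simp: transp_apply)
next
  case (Cons j2 r2)
  assume a: "v j r c"
  then have "v (j2 - 1) r2 c" "j + 2 \<le> j2" using Cons v_tail by auto
  then have "gch (j2 - 1) r2 c j = j" using g_fix by auto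
  then show ?thesis using Cons \<open>j + 2 \<le> j2\<close> by (auto simp: transp_apply)
qed

lemma g_jm1: "v j r c \<Longrightarrow> gch (j - 1) r c (j - 1) > j"
proof (cases r)
  case Nil
  assume "v j r c" then show ?thesis using Nil by (auto simp: transp_apply)
next
  case (Cons j2 r2)
  assume a: "v j r c"
  then have "v (j2 - 1) r2 c" "j + 2 \<le> j2" using Cons v_tail by auto
  then have "gch (j2 - 1) r2 c (j - 1) = j - 1" using g_fix by auto
  then show ?thesis using Cons \<open>j + 2 \<le> j2\<close> by (auto simp: transp_apply)
qed

lemma g_a: "v a is c \<Longrightarrow> gch a is c a > a"
proof (cases "is")
  case Nil
  assume "v a is c" then show ?thesis using Nil by (auto simp: transp_apply)
next
  case (Cons j r)
  assume a: "v a is c"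
  then have "v (j - 1) r c" "a + 2 \<le> j" using Cons v_tail by auto
  then have "gch (j - 1) r c a = a" using g_fix by auto
  then show ?thesis using Cons \<open>a + 2 \<le> j\<close> by (auto simp: transp_apply)
qed

lemma g_c: "v a is c \<Longrightarrow> gch a is c c < c"
proof (induction "is" arbitrary: a)
  case Nil then show ?case by (auto simp: transp_apply)
next
  case (Cons j r)
  have v1: "v (j - 1) r c" using Cons.prems v_tail by blast
  have jc: "j < c" "a + 2 \<le> j" using Cons.prems v_lt by auto
  have "gch (j - 1) r c c < c" "j - 1 \<le> gch (j - 1) r c c" using Cons.IH[OF v1] g_range[OF v1, of c] jc by auto
  then show ?case using jc by (auto simp: transp_apply)
qed

lemma g_inv: "v a is c \<Longrightarrow> gch a is c (gch a is c x) = x"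
proof (induction "is" arbitrary: a x)
  case Nil then show ?case by (auto simp: transp_apply)
next
  case (Cons j r)
  have v1: "v (j - 1) r c" using Cons.prems v_tail by blast
  have jc: "j < c" "a + 2 \<le> j" "v j r c" using Cons.prems v_lt by auto
  let ?g = "gch (j - 1) r c"
  have fa: "?g a = a" using g_fix[OF v1] jc by auto
  have fj: "?g j = j" using g_j jc by auto
  have ii: "\<And>y. ?g (?g y) = y" using Cons.IH[OF v1] by auto
  show ?case
  proof (cases "?g x = a \<or> ?g x = j")
    case True
    then have "x = a \<or> x = j" using ii[of x] fa fj by metis
    then show ?thesis using fa fj jc by (auto simp: transp_apply)
  next
    case False
    then have "x \<noteq> a \<and> x \<noteq> j" using fa fj by auto
    then show ?thesis using False ii[of x] by (auto simp: transp_apply)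
  qed
qed

lemma conj_transp: "s i \<circ> transp a b \<circ> s i = transp (s i a) (s i b)"
  by (auto simp: fun_eq_iff transp_apply s_apply)

lemma conj_comp: "s i \<circ> (f \<circ> g) \<circ> s i = (s i \<circ> f \<circ> s i) \<circ> (s i \<circ> g \<circ> s i)"
  by (simp add: fun_eq_iff)

lemma g_comm: assumes "v a is c" "c < i \<or> i + 1 < a"
  shows "s i \<circ> gch a is c \<circ> s i = gch a is c"
proof (rule ext)
  fix x
  show "(s i \<circ> gch a is c \<circ> s i) x = gch a is c x"
  proof (cases "a \<le> x \<and> x \<le> c")
    case True
    then have "a \<le> gch a is c x \<and> gch a is c x \<le> c" using g_range assms by auto
    then show ?thesis using True assms by (auto simp: s_apply)
  next
    case False
    then have "gch a is c x = x" using g_fix assms by auto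
    moreover have "gch a is c (s i x) = s i x" using g_fix assms False by (auto simp: s_apply)
    ultimately show ?thesis by auto
  qed
qed

lemma conjL: assumes "v (i + 1) js c" shows "s i \<circ> gch (i + 1) js c \<circ> s i = gch i js c"
proof (cases js)
  case Nil
  then have "i + 1 < c" using assms by auto
  then show ?thesis using Nil by (simp add: conj_transp) (simp add: s_apply)
next
  case (Cons j r)
  have v1: "v (j - 1) r c" using assms Cons v_tail by blast
  have ij: "i + 3 \<le> j" using assms Cons by auto
  have "s i \<circ> gch (i + 1) js c \<circ> s i = (s i \<circ> transp (i+1) j \<circ> s i) \<circ> (s i \<circ> gch (j - 1) r c \<circ> s i)"
    using Cons conj_comp by simp
  also have "\<dots> = transp i j \<circ> gch (j - 1) r c"
    using g_comm[OF v1, of i] ij by (simp add: conj_transp) (simp add: s_apply)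
  finally show ?thesis using Cons by simp
qed

lemma conjR: "v a is i \<Longrightarrow> s i \<circ> gch a is i \<circ> s i = gch a is (i + 1)"
proof (induction "is" arbitrary: a)
  case Nil
  have sa: "s i a = a" "s i i = i + 1" using Nil by (auto simp: s_apply)
  show ?case by (simp only: gch.simps conj_transp sa)
next
  case (Cons j r)
  have v1: "v (j - 1) r i" using Cons.prems v_tail by blast
  have jc: "j < i" "a + 2 \<le> j" using Cons.prems v_lt by auto
  have "s i \<circ> gch a (j # r) i \<circ> s i = (s i \<circ> transp a j \<circ> s i) \<circ> (s i \<circ> gch (j - 1) r i \<circ> s i)"
    using conj_comp by simp
  also have "\<dots> = transp a j \<circ> gch (j - 1) r (i + 1)"
  proof -
    have "s i a = a" "s i j = j" using jc by (auto simp: s_apply)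
    then show ?thesis using Cons.IH[OF v1] by (simp only: conj_transp)
  qed
  finally show ?case by (simp only: gch.simps)
qed

lemma conjM: "v a is i \<Longrightarrow> v (i + 1) js c \<Longrightarrow>
   s i \<circ> (gch a is i \<circ> gch (i + 1) js c) \<circ> s i = gch a (is @ (i + 1) # js) c"
proof (induction "is" arbitrary: a)
  case Nil
  have "s i \<circ> (gch a [] i \<circ> gch (i + 1) js c) \<circ> s i = (s i \<circ> transp a i \<circ> s i) \<circ> (s i \<circ> gch (i + 1) js c \<circ> s i)"
    using conj_comp by simp
  also have "\<dots> = transp a (i + 1) \<circ> gch i js c"
  proof -
    have "s i a = a" "s i i = i + 1" using Nil.prems by (auto simp: s_apply)
    then show ?thesis using conjL[OF Nil.prems(2)] by (simp only: conj_transp)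
  qed
  finally show ?case by (simp only: append.simps gch.simps add_diff_cancel_right')
next
  case (Cons j r)
  have v1: "v (j - 1) r i" using Cons.prems v_tail by blast
  have jc: "j < i" "a + 2 \<le> j" using Cons.prems v_lt by auto
  have "s i \<circ> (gch a (j # r) i \<circ> gch (i + 1) js c) \<circ> s i
     = (s i \<circ> transp a j \<circ> s i) \<circ> (s i \<circ> (gch (j - 1) r i \<circ> gch (i + 1) js c) \<circ> s i)"
    by (simp add: fun_eq_iff)
  also have "\<dots> = transp a j \<circ> gch (j - 1) (r @ (i + 1) # js) c"
  proof -
    have "s i a = a" "s i j = j" using jc by (auto simp: s_apply)
    then show ?thesis using Cons.IH[OF v1 Cons.prems(2)] by (simp only: conj_transp)
  qed
  finally show ?case by (simp only: append_Cons gch.simps)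
qed

lemma v_merge: "v a is i \<Longrightarrow> v (i + 1) js c \<Longrightarrow> v a (is @ (i + 1) # js) c"
  by (induction "is" arbitrary: a) auto

lemma vfix: "v (j - 1) r x \<Longrightarrow> (r = [] \<Longrightarrow> j < x) \<Longrightarrow> (\<And>j2 r'. r = j2 # r' \<Longrightarrow> j + 2 \<le> j2) \<Longrightarrow> v j r x"
  by (cases r) auto

lemma desc_class:
  "v a is c \<Longrightarrow> gch a is c i > gch a is c (i + 1) \<Longrightarrow>
   (i = a \<and> c = a + 1 \<and> is = []) \<or> (i = a \<and> v (a + 1) is c) \<or> (i + 1 = c \<and> v a is i)
   \<or> (\<exists>is1 is2. is = is1 @ (i + 1) # is2 \<and> v a is1 i \<and> v (i + 1) is2 c)"
proof (induction "is" arbitrary: a)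
  case Nil
  then have ac: "a < c" by auto
  have "i = a \<or> i + 1 = c"
  proof (rule ccontr)
    assume "\<not> (i = a \<or> i + 1 = c)"
    then show False using Nil.prems ac by (auto simp: transp_apply split: if_splits)
  qed
  then show ?case using ac by auto
next
  case (Cons j r)
  have v1: "v (j - 1) r c" using Cons.prems v_tail by blast
  have jc: "a + 2 \<le> j" "j < c" "v j r c" using Cons.prems v_lt by auto
  let ?g = "gch (j - 1) r c"
  have G: "\<And>x. gch a (j # r) c x = transp a j (?g x)" by simp
  have gfix: "\<And>x. x < j - 1 \<or> c < x \<Longrightarrow> ?g x = x" using g_fix[OF v1] by auto
  have grange: "\<And>x. j - 1 \<le> x \<Longrightarrow> x \<le> c \<Longrightarrow> j - 1 \<le> ?g x \<and> ?g x \<le> c" using g_range[OF v1] by auto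
  have gj: "?g j = j" using g_j jc by auto
  have gj1: "?g (j - 1) > j" using g_jm1 jc by auto
  have ginv: "\<And>x. ?g (?g x) = x" using g_inv[OF v1] by auto
  have desc: "transp a j (?g i) > transp a j (?g (i + 1))" using Cons.prems(2) G by metis
  consider "i + 1 < j - 1" | "i + 1 = j - 1" | "i = j - 1" | "i = j" | "i > j" by linarith
  then show ?case
  proof cases
    case 1
    then have "?g i = i" "?g (i + 1) = i + 1" using gfix by auto
    then have "i = a" using desc 1 jc by (auto simp: transp_apply split: if_splits)
    then show ?thesis using 1 jc by auto
  next
    case 2
    then have "?g i = i" using gfix by auto
    then have t1: "transp a j (?g i) \<le> j" using 2 jc by (auto simp: transp_apply)
    have e: "i + 1 = j - 1" using 2 by simp
    have h: "?g (i + 1) > j" using gj1 unfolding e .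
    then have "transp a j (?g (i + 1)) = ?g (i + 1)" using jc by (auto simp: transp_apply)
    then have False using desc t1 h by linarith
    then show ?thesis ..
  next
    case 3
    then show ?thesis using jc by (intro disjI2 exI[of _ "[]"] exI[of _ r]) auto
  next
    case 4
    have "j - 1 \<le> ?g (j + 1)"
      using gfix[of "j + 1"] grange[of "j + 1"] by (cases "j + 1 \<le> c") auto
    then have "transp a j (?g (i + 1)) \<ge> a" using 4 jc by (auto simp: transp_apply)
    moreover have "transp a j (?g i) = a" using 4 gj by (auto simp: transp_apply)
    ultimately have False using desc by auto
    then show ?thesis ..
  next
    case 5
    have nj: "\<And>x. x > j \<Longrightarrow> ?g x \<noteq> j \<and> ?g x \<noteq> a"
    proof -
      fix x assume "x > j"
      have "?g x \<noteq> j"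
      proof
        assume "?g x = j"
        then have "x = j" using ginv[of x] gj by simp
        then show False using \<open>x > j\<close> by simp
      qed
      moreover have "j - 1 \<le> ?g x" using gfix[of x] grange[of x] \<open>x > j\<close> by (cases "x \<le> c") auto
      ultimately show "?g x \<noteq> j \<and> ?g x \<noteq> a" using jc by auto
    qed
    have d': "?g i > ?g (i + 1)" using desc nj[of i] nj[of "i+1"] 5 by (auto simp: transp_apply)
    have hj: "\<And>j2 r'. r = j2 # r' \<Longrightarrow> j + 2 \<le> j2" using jc by auto
    from Cons.IH[OF v1 d'] 5 show ?thesis
    proof (elim disjE exE conjE)
      assume "i + 1 = c" "v (j - 1) r i"
      then have "v j r i" using vfix hj 5 by blast
      then show ?thesis using \<open>i + 1 = c\<close> jc by auto
    next
      fix is1 is2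
      assume r: "r = is1 @ (i + 1) # is2" and a1: "v (j - 1) is1 i" and a2: "v (i + 1) is2 c"
      have "v j is1 i"
      proof (rule vfix[OF a1])
        show "is1 = [] \<Longrightarrow> j < i" using 5 by auto
        fix j2 r' assume "is1 = j2 # r'"
        then show "j + 2 \<le> j2" using hj r by auto
      qed
      then show ?thesis using r a2 jc
        by (intro disjI2 exI[of _ "j # is1"] exI[of _ is2]) auto
    qed auto
  qed
qed

definition inv2 :: "(int \<Rightarrow> int) \<Rightarrow> bool" where "inv2 z = (\<forall>x. z (z x) = x)"
definition mix :: "int \<Rightarrow> (int \<Rightarrow> int) \<Rightarrow> bool" where "mix i z = (\<exists>x \<le> i. z x > i)"

lemma iw_snoc: "iw_run z (p @ [i]) = (case iw_run z p of None \<Rightarrow> None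
   | Some y \<Rightarrow> if y i > y (i + 1) then None else Some (rtimes y i))"
  by (induction p arbitrary: z) auto

lemma rt_cases: "rtimes z i = (if z \<circ> s i = s i \<circ> z then z \<circ> s i else s i \<circ> z \<circ> s i)"
  by (simp add: rtimes_def)

lemma rt_comm: "z \<circ> s i = s i \<circ> z \<Longrightarrow> rtimes z i = z \<circ> s i"
  unfolding rtimes_def by auto
lemma rt_ncomm: "z \<circ> s i \<noteq> s i \<circ> z \<Longrightarrow> rtimes z i = s i \<circ> z \<circ> s i"
  unfolding rtimes_def by auto

lemma rt_inv2: assumes "inv2 z" shows "inv2 (rtimes z i)"
proof (cases "z \<circ> s i = s i \<circ> z")
  case True
  then have c: "\<And>x. z (s i x) = s i (z x)" by (metis comp_apply)
  show ?thesis using True assms unfolding rt_cases inv2_def by (simp add: c)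
next
  case False
  then show ?thesis using assms unfolding rt_cases inv2_def by simp
qed

lemma iw_inv2: "iw_run z p = Some y \<Longrightarrow> inv2 z \<Longrightarrow> inv2 y"
  by (induction p arbitrary: z) (auto split: if_splits intro: rt_inv2)

lemma inv2_id: "inv2 id" by (simp add: inv2_def)

lemma inv2_inj: "inv2 z \<Longrightarrow> z x = z y \<Longrightarrow> x = y"
  unfolding inv2_def by metis

lemma fix_commute: assumes "inv2 z" "z i = i" "z (i + 1) = i + 1" shows "z \<circ> s i = s i \<circ> z"
proof (rule ext)
  fix x
  show "(z \<circ> s i) x = (s i \<circ> z) x"
  proof (cases "x = i \<or> x = i + 1")
    case True then show ?thesis using assms by (auto simp: s_apply)
  next
    case False
    then have "z x \<noteq> i \<and> z x \<noteq> i + 1" using assms inv2_inj by metis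
    then show ?thesis using False by (auto simp: s_apply)
  qed
qed

lemma rt_desc: assumes "inv2 z" "\<not> z i > z (i + 1)"
  shows "rtimes z i i > rtimes z i (i + 1)"
proof -
  have ne: "z i \<noteq> z (i + 1)" using assms inv2_inj by fastforce
  then have lt: "z i < z (i + 1)" using assms by auto
  show ?thesis
  proof (cases "z \<circ> s i = s i \<circ> z")
    case True
    have r: "rtimes z i = z \<circ> s i" using True by (rule rt_comm)
    show ?thesis using lt unfolding r by (simp add: s_apply)
  next
    case False
    then have "\<not> (z i = i \<and> z (i + 1) = i + 1)" using fix_commute assms by blast
    then show ?thesis using lt False by (auto simp: rt_ncomm s_apply)
  qed
qed

lemma desc_mix: assumes "inv2 z" "z i > z (i + 1)" shows "mix i z"
proof (cases "z i > i")
  case True then show ?thesis unfolding mix_def by auto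
next
  case False
  then have "z (i + 1) \<le> i" using assms by auto
  moreover have "z (z (i + 1)) = i + 1" using assms unfolding inv2_def by auto
  ultimately show ?thesis unfolding mix_def by (intro exI[of _ "z (i + 1)"]) auto
qed

lemma mix_step: assumes "inv2 z" "\<not> z j > z (j + 1)" "mix i z \<or> j = i"
  shows "mix i (rtimes z j)"
proof (cases "j = i")
  case True
  then show ?thesis using desc_mix rt_desc rt_inv2 assms by blast
next
  case False
  then obtain x where x: "x \<le> i" "z x > i" using assms unfolding mix_def by auto
  have sx: "s j x \<le> i" using x False by (auto simp: s_apply)
  have szx: "s j (z x) > i" using x False by (auto simp: s_apply)
  show ?thesis
  proof (cases "z \<circ> s j = s j \<circ> z")
    case True
    have r: "rtimes z j = z \<circ> s j" using True by (rule rt_comm)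
    show ?thesis using sx x unfolding r mix_def by (intro exI[of _ "s j x"]) auto
  next
    case False
    then show ?thesis using sx szx unfolding rt_ncomm[OF False] mix_def by (intro exI[of _ "s j x"]) auto
  qed
qed

lemma iw_mix: "iw_run z p = Some y \<Longrightarrow> inv2 z \<Longrightarrow> mix i z \<or> i \<in> set p \<Longrightarrow> mix i y"
proof (induction p arbitrary: z)
  case Nil then show ?case by auto
next
  case (Cons j p)
  have nd: "\<not> z j > z (j + 1)" and r: "iw_run (rtimes z j) p = Some y"
    using Cons.prems by (auto split: if_splits)
  have "mix i (rtimes z j) \<or> i \<in> set p" using mix_step[OF Cons.prems(2) nd] Cons.prems(3) by auto
  then show ?case using Cons.IH[OF r rt_inv2[OF Cons.prems(2)]] by auto
qed

lemma iw_id_nil: assumes "iw_run id p = Some id" shows "p = []"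
proof (rule ccontr)
  assume "p \<noteq> []"
  then have "hd p \<in> set p" by auto
  then have "mix (hd p) id" using iw_mix[OF assms inv2_id] by auto
  then show False unfolding mix_def by auto
qed

lemma rt_inj: assumes "rtimes z1 i = rtimes z2 i" shows "z1 = z2"
proof -
  have cc: "\<And>z. (z \<circ> s i) \<circ> s i = z" by (simp add: fun_eq_iff)
  have cc2: "\<And>z. s i \<circ> (s i \<circ> z \<circ> s i) \<circ> s i = z" by (simp add: fun_eq_iff)
  have comm1: "\<And>z. z \<circ> s i = s i \<circ> z \<Longrightarrow> (z \<circ> s i) \<circ> s i = s i \<circ> (z \<circ> s i)"
  proof -
    fix z :: "int \<Rightarrow> int" assume "z \<circ> s i = s i \<circ> z"
    then show "(z \<circ> s i) \<circ> s i = s i \<circ> (z \<circ> s i)" by (simp add: comp_assoc)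
  qed
  have comm2: "\<And>z. (s i \<circ> z \<circ> s i) \<circ> s i = s i \<circ> (s i \<circ> z \<circ> s i) \<Longrightarrow> z \<circ> s i = s i \<circ> z"
    by (simp add: fun_eq_iff)
  show ?thesis
  proof (cases "z1 \<circ> s i = s i \<circ> z1"; cases "z2 \<circ> s i = s i \<circ> z2")
    assume a: "z1 \<circ> s i = s i \<circ> z1" "z2 \<circ> s i = s i \<circ> z2"
    then have "z1 \<circ> s i = z2 \<circ> s i" using assms unfolding rt_cases by simp
    then show ?thesis using cc by metis
  next
    assume a: "z1 \<circ> s i = s i \<circ> z1" "z2 \<circ> s i \<noteq> s i \<circ> z2"
    then have e: "z1 \<circ> s i = s i \<circ> z2 \<circ> s i" using assms unfolding rt_cases by simp
    have "(s i \<circ> z2 \<circ> s i) \<circ> s i = s i \<circ> (s i \<circ> z2 \<circ> s i)" using comm1[OF a(1)] unfolding e .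
    then show ?thesis using comm2 a by blast
  next
    assume a: "z1 \<circ> s i \<noteq> s i \<circ> z1" "z2 \<circ> s i = s i \<circ> z2"
    then have e: "z2 \<circ> s i = s i \<circ> z1 \<circ> s i" using assms unfolding rt_cases by simp
    have "(s i \<circ> z1 \<circ> s i) \<circ> s i = s i \<circ> (s i \<circ> z1 \<circ> s i)" using comm1[OF a(2)] unfolding e .
    then show ?thesis using comm2 a by blast
  next
    assume a: "z1 \<circ> s i \<noteq> s i \<circ> z1" "z2 \<circ> s i \<noteq> s i \<circ> z2"
    then have "s i \<circ> z1 \<circ> s i = s i \<circ> z2 \<circ> s i" using assms unfolding rt_cases by simp
    then show ?thesis using cc2 by metis
  qed
qed

definition lo :: "int \<Rightarrow> (int \<Rightarrow> int) \<Rightarrow> bool" where "lo i z = (\<forall>x > i. z x = x)"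
definition hi :: "int \<Rightarrow> (int \<Rightarrow> int) \<Rightarrow> bool" where "hi i z = (\<forall>x \<le> i. z x = x)"

lemma lo_maps: "inv2 z \<Longrightarrow> lo i z \<Longrightarrow> x \<le> i \<Longrightarrow> z x \<le> i"
  unfolding inv2_def lo_def by (metis not_le)
lemma hi_maps: "inv2 z \<Longrightarrow> hi i z \<Longrightarrow> x > i \<Longrightarrow> z x > i"
  unfolding inv2_def hi_def by (metis not_le)

lemma lohi_comm: assumes "lo i f" "hi i g" "inv2 f" "inv2 g" shows "f \<circ> g = g \<circ> f"
proof (rule ext)
  fix x show "(f \<circ> g) x = (g \<circ> f) x"
  proof (cases "x \<le> i")
    case True then show ?thesis using assms lo_maps[of f i x] unfolding hi_def by auto
  next
    case False then show ?thesis using assms hi_maps[of g i x] unfolding lo_def by auto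
  qed
qed

lemma lo_comm_s: assumes "lo i f" "inv2 f" "i < j" shows "f \<circ> s j = s j \<circ> f"
proof (rule ext)
  fix x show "(f \<circ> s j) x = (s j \<circ> f) x"
  proof (cases "x \<le> i")
    case True then show ?thesis using assms lo_maps[of f i x] by (auto simp: s_apply)
  next
    case False then show ?thesis using assms unfolding lo_def by (auto simp: s_apply)
  qed
qed

lemma hi_comm_s: assumes "hi i g" "inv2 g" "j < i" shows "g \<circ> s j = s j \<circ> g"
proof (rule ext)
  fix x show "(g \<circ> s j) x = (s j \<circ> g) x"
  proof (cases "x \<le> i")
    case True then show ?thesis using assms unfolding hi_def by (auto simp: s_apply)
  next
    case False then show ?thesis using assms hi_maps[of g i x] by (auto simp: s_apply)
  qed
qed

lemma rt_comp_right: assumes "z2 \<circ> s j = s j \<circ> z2" "inv2 z2"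
  shows "rtimes (z1 \<circ> z2) j = rtimes z1 j \<circ> z2"
proof -
  have canc: "\<And>f g :: int \<Rightarrow> int. f \<circ> z2 = g \<circ> z2 \<Longrightarrow> f = g"
  proof -
    fix f g :: "int \<Rightarrow> int" assume "f \<circ> z2 = g \<circ> z2"
    then have "f \<circ> z2 \<circ> z2 = g \<circ> z2 \<circ> z2" by simp
    moreover have "z2 \<circ> z2 = id" using assms(2) unfolding inv2_def by auto
    ultimately show "f = g" by (simp add: comp_assoc)
  qed
  have e1: "(z1 \<circ> z2) \<circ> s j = (z1 \<circ> s j) \<circ> z2" using assms(1) by (simp add: comp_assoc)
  have e2: "s j \<circ> (z1 \<circ> z2) = (s j \<circ> z1) \<circ> z2" by (simp add: comp_assoc)
  have iff: "((z1 \<circ> z2) \<circ> s j = s j \<circ> (z1 \<circ> z2)) = (z1 \<circ> s j = s j \<circ> z1)"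
    unfolding e1 e2 using canc by auto
  show ?thesis
  proof (cases "z1 \<circ> s j = s j \<circ> z1")
    case True
    have r1: "rtimes z1 j = z1 \<circ> s j" using True by (rule rt_comm)
    have r2: "rtimes (z1 \<circ> z2) j = (z1 \<circ> z2) \<circ> s j" using True iff by (intro rt_comm) blast
    show ?thesis unfolding r1 r2 e1 ..
  next
    case False
    have r1: "rtimes z1 j = s j \<circ> z1 \<circ> s j" using False by (rule rt_ncomm)
    have r2: "rtimes (z1 \<circ> z2) j = s j \<circ> (z1 \<circ> z2) \<circ> s j" using False iff by (intro rt_ncomm) blast
    show ?thesis unfolding r1 r2 using assms(1) by (simp add: comp_assoc)
  qed
qed

lemma lo_rt: assumes "lo i z" "j < i" shows "lo i (rtimes z j)"
  using assms unfolding lo_def rtimes_def by (auto simp: s_apply)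
lemma hi_rt: assumes "hi i z" "i < j" shows "hi i (rtimes z j)"
  using assms unfolding hi_def rtimes_def by (auto simp: s_apply)

lemma iw_lo: "iw_run z p = Some y \<Longrightarrow> (\<forall>j \<in> set p. j < i) \<Longrightarrow> lo i z \<Longrightarrow> lo i y"
  by (induction p arbitrary: z) (auto split: if_splits intro: lo_rt)
lemma iw_hi: "iw_run z p = Some y \<Longrightarrow> (\<forall>j \<in> set p. i < j) \<Longrightarrow> hi i z \<Longrightarrow> hi i y"
  by (induction p arbitrary: z) (auto split: if_splits intro: hi_rt)

lemma iw_split:
  "i \<notin> set p \<Longrightarrow> inv2 z1 \<Longrightarrow> inv2 z2 \<Longrightarrow> lo i z1 \<Longrightarrow> hi i z2 \<Longrightarrow>
   iw_run (z1 \<circ> z2) p = (case iw_run z1 (filter (\<lambda>j. j < i) p) of None \<Rightarrow> None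
      | Some y1 \<Rightarrow> (case iw_run z2 (filter (\<lambda>j. i < j) p) of None \<Rightarrow> None
      | Some y2 \<Rightarrow> Some (y1 \<circ> y2)))"
proof (induction p arbitrary: z1 z2)
  case Nil then show ?case by (simp add: comp_def)
next
  case (Cons j p)
  have ji: "j \<noteq> i" "i \<notin> set p" using Cons.prems by auto
  show ?case
  proof (cases "j < i")
    case True
    have v1: "(z1 \<circ> z2) j = z1 j" "(z1 \<circ> z2) (j + 1) = z1 (j + 1)"
      using Cons.prems(5) True unfolding hi_def by auto
    have rt: "rtimes (z1 \<circ> z2) j = rtimes z1 j \<circ> z2"
      using rt_comp_right hi_comm_s Cons.prems True by blast
    have IH: "iw_run (rtimes z1 j \<circ> z2) p = (case iw_run (rtimes z1 j) (filter (\<lambda>j. j < i) p) of None \<Rightarrow> None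
      | Some y1 \<Rightarrow> (case iw_run z2 (filter (\<lambda>j. i < j) p) of None \<Rightarrow> None
      | Some y2 \<Rightarrow> Some (y1 \<circ> y2)))"
      using Cons.IH[OF ji(2) rt_inv2[OF Cons.prems(2)] Cons.prems(3) lo_rt[OF Cons.prems(4) True] Cons.prems(5)] .
    have f2: "filter (\<lambda>j. i < j) (j # p) = filter (\<lambda>j. i < j) p" using True by simp
    show ?thesis unfolding f2 using True IH v1 rt by (simp del: comp_apply)
  next
    case False
    then have ij: "i < j" using ji by auto
    have v1: "(z1 \<circ> z2) j = z2 j" "(z1 \<circ> z2) (j + 1) = z2 (j + 1)"
      using Cons.prems(4) hi_maps[OF Cons.prems(3,5)] ij unfolding lo_def by auto
    have c: "z1 \<circ> z2 = z2 \<circ> z1" using lohi_comm Cons.prems by blast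
    have rt0: "rtimes (z2 \<circ> z1) j = rtimes z2 j \<circ> z1"
      using rt_comp_right lo_comm_s Cons.prems ij by blast
    have c2: "rtimes z2 j \<circ> z1 = z1 \<circ> rtimes z2 j"
      using lohi_comm[OF Cons.prems(4) hi_rt[OF Cons.prems(5) ij] Cons.prems(2) rt_inv2[OF Cons.prems(3)]] by simp
    have rt: "rtimes (z1 \<circ> z2) j = z1 \<circ> rtimes z2 j" using rt0 c c2 by simp
    have IH: "iw_run (z1 \<circ> rtimes z2 j) p = (case iw_run z1 (filter (\<lambda>j. j < i) p) of None \<Rightarrow> None
      | Some y1 \<Rightarrow> (case iw_run (rtimes z2 j) (filter (\<lambda>j. i < j) p) of None \<Rightarrow> None
      | Some y2 \<Rightarrow> Some (y1 \<circ> y2)))"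
      using Cons.IH[OF ji(2) Cons.prems(2) rt_inv2[OF Cons.prems(3)] Cons.prems(4) hi_rt[OF Cons.prems(5) ij]] .
    have f1: "filter (\<lambda>j. j < i) (j # p) = filter (\<lambda>j. j < i) p" using ij by simp
    show ?thesis unfolding f1 using False ij IH v1 rt by (simp del: comp_apply split: option.splits)
  qed
qed

lemma g_lo: "v a is c \<Longrightarrow> lo c (gch a is c)"
  unfolding lo_def using g_fix by auto
lemma g_hi: "v a is c \<Longrightarrow> a' < a \<Longrightarrow> hi a' (gch a is c)"
  unfolding hi_def using g_fix by auto
lemma g_inv2: "v a is c \<Longrightarrow> inv2 (gch a is c)"
  unfolding inv2_def using g_inv by auto

lemma ncomm_at: "(g \<circ> s i) i \<noteq> (s i \<circ> g) i \<Longrightarrow> g \<circ> s i \<noteq> s i \<circ> g" by metis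

lemma FL: assumes "v (i + 1) js c"
  shows "\<not> gch (i + 1) js c i > gch (i + 1) js c (i + 1) \<and> rtimes (gch (i + 1) js c) i = gch i js c"
proof -
  let ?g = "gch (i + 1) js c"
  have a: "?g i = i" using g_fix assms by auto
  have b: "?g (i + 1) > i + 1" using g_a assms by auto
  have "?g \<circ> s i \<noteq> s i \<circ> ?g" by (rule ncomm_at) (use a b in \<open>auto simp add: s_apply\<close>)
  then have "rtimes ?g i = s i \<circ> ?g \<circ> s i" by (rule rt_ncomm)
  then show ?thesis using conjL[OF assms] a b by simp
qed

lemma FR: assumes "v a is i"
  shows "\<not> gch a is i i > gch a is i (i + 1) \<and> rtimes (gch a is i) i = gch a is (i + 1)"
proof -
  let ?g = "gch a is i"
  have a: "?g i < i" using g_c assms by auto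
  have b: "?g (i + 1) = i + 1" using g_fix assms by auto
  have "?g \<circ> s i \<noteq> s i \<circ> ?g" by (rule ncomm_at) (use a b in \<open>auto simp add: s_apply\<close>)
  then have "rtimes ?g i = s i \<circ> ?g \<circ> s i" by (rule rt_ncomm)
  then show ?thesis using conjR[OF assms] a b by simp
qed

lemma FM: assumes "v a is i" "v (i + 1) js c"
  shows "\<not> (gch a is i \<circ> gch (i + 1) js c) i > (gch a is i \<circ> gch (i + 1) js c) (i + 1)
     \<and> rtimes (gch a is i \<circ> gch (i + 1) js c) i = gch a (is @ (i + 1) # js) c"
proof -
  let ?g1 = "gch a is i" and ?g2 = "gch (i + 1) js c"
  let ?g = "?g1 \<circ> ?g2"
  have a1: "?g2 i = i" using g_fix assms by auto
  have a: "?g i < i" using g_c assms a1 by auto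
  have b1: "?g2 (i + 1) > i + 1" using g_a assms by auto
  then have b: "?g (i + 1) > i + 1" using g_fix[OF assms(1), of "?g2 (i + 1)"] by auto
  have "?g \<circ> s i \<noteq> s i \<circ> ?g" by (rule ncomm_at) (use a b in \<open>auto simp add: s_apply\<close>)
  then have "rtimes ?g i = s i \<circ> ?g \<circ> s i" by (rule rt_ncomm)
  then show ?thesis using conjM[OF assms] a b by simp
qed

lemma rt_id: "rtimes id i = gch i [] (i + 1)"
proof -
  have "id \<circ> s i = s i \<circ> id" by simp
  then have "rtimes id i = id \<circ> s i" by (rule rt_comm)
  then show ?thesis by (simp add: s_def)
qed

lemma lohi_unique:
  assumes "lo i y1" "hi i y2" "lo i g1" "hi i g2" "inv2 y2" "inv2 g2" "y1 \<circ> y2 = g1 \<circ> g2"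
  shows "y1 = g1 \<and> y2 = g2"
proof -
  have e: "\<And>x. y1 (y2 x) = g1 (g2 x)" using assms(7) by (metis comp_apply)
  have 1: "y1 = g1"
  proof
    fix x show "y1 x = g1 x"
      using e[of x] assms(1-4) unfolding lo_def hi_def by (cases "x \<le> i") auto
  qed
  have 2: "y2 = g2"
  proof
    fix x show "y2 x = g2 x"
    proof (cases "x \<le> i")
      case True then show ?thesis using assms(2,4) unfolding hi_def by auto
    next
      case False
      then have "y2 x > i" "g2 x > i" using hi_maps assms by auto
      then show ?thesis using e[of x] assms(1,3) unfolding lo_def by auto
    qed
  qed
  show ?thesis using 1 2 by auto
qed

lemma dist_split: "(i::int) \<notin> set p \<Longrightarrow> distinct (filter (\<lambda>j. j < i) p) \<Longrightarrow> distinct (filter (\<lambda>j. i < j) p) \<Longrightarrow> distinct p"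
  by (induction p) (auto split: if_splits)

lemma back_main:
  "length w = N \<Longrightarrow> v a is c \<Longrightarrow> iw_run id w = Some (gch a is c) \<Longrightarrow> distinct w \<and> set w = {a..c-1}"
proof (induction N arbitrary: w a "is" c rule: less_induct)
  case (less N)
  show ?case
  proof (cases w rule: rev_cases)
    case Nil
    then have "gch a is c a = a" using less.prems by (auto simp: fun_eq_iff)
    then show ?thesis using g_a[OF less.prems(2)] by simp
  next
    case (snoc p i)
    have e: "(case iw_run id p of None \<Rightarrow> None | Some y \<Rightarrow> if y i > y (i + 1) then None else Some (rtimes y i)) = Some (gch a is c)"
      using less.prems(3) unfolding snoc iw_snoc .
    obtain z where z: "iw_run id p = Some z" and nd: "\<not> z i > z (i + 1)" and rz: "rtimes z i = gch a is c"
    proof (cases "iw_run id p")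
      case None then show ?thesis using e by simp
    next
      case (Some y)
      then show ?thesis using e that[of y] by (simp split: if_splits)
    qed
    have iz: "inv2 z" using iw_inv2[OF z inv2_id] .
    have d: "gch a is c i > gch a is c (i + 1)" using rt_desc[OF iz nd] rz by simp
    have lp: "length p < N" using snoc less.prems(1) by simp
    from desc_class[OF less.prems(2) d] show ?thesis
    proof (elim disjE exE conjE)
      assume h: "i = a" "c = a + 1" "is = []"
      then have "rtimes z i = rtimes id i" using rz rt_id by simp
      then have "z = id" by (rule rt_inj)
      then have "p = []" using z iw_id_nil by simp
      then show ?thesis using snoc h by auto
    next
      assume h: "i = a" "v (a + 1) is c"
      have "rtimes z i = rtimes (gch (a + 1) is c) i" using rz FL[of i "is" c] h by simp
      then have "z = gch (a + 1) is c" by (rule rt_inj)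
      then have "distinct p \<and> set p = {a + 1..c - 1}" using less.IH[OF lp refl h(2)] z by (simp add: id_def)
      then show ?thesis using snoc h v_lt[OF h(2)] by auto
    next
      assume h: "i + 1 = c" "v a is i"
      have "rtimes z i = rtimes (gch a is i) i" using rz FR[OF h(2)] h by simp
      then have "z = gch a is i" by (rule rt_inj)
      then have "distinct p \<and> set p = {a..i - 1}" using less.IH[OF lp refl h(2)] z by (simp add: id_def)
      then show ?thesis using snoc h v_lt[OF h(2)] by auto
    next
      fix is1 is2
      assume h: "is = is1 @ (i + 1) # is2" "v a is1 i" "v (i + 1) is2 c"
      let ?g1 = "gch a is1 i" and ?g2 = "gch (i + 1) is2 c"
      have "rtimes z i = rtimes (?g1 \<circ> ?g2) i" using rz FM[OF h(2,3)] h by simp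
      then have ze: "z = ?g1 \<circ> ?g2" by (rule rt_inj)
      have lo1: "lo i ?g1" using g_lo h by auto
      have hi2: "hi i ?g2" using g_hi h by auto
      have i1: "inv2 ?g1" "inv2 ?g2" using g_inv2 h by auto
      have ai: "a < i" "i + 1 < c" using v_lt h by auto
      have nip: "i \<notin> set p"
      proof
        assume "i \<in> set p"
        then have "mix i z" using iw_mix[OF z inv2_id] by auto
        then obtain x where "x \<le> i" "z x > i" unfolding mix_def by auto
        moreover have "?g2 x = x" using hi2 \<open>x \<le> i\<close> unfolding hi_def by auto
        ultimately show False using lo_maps[OF i1(1) lo1 \<open>x \<le> i\<close>] ze by simp
      qed
      have sp: "iw_run (id \<circ> id) p = (case iw_run id (filter (\<lambda>j. j < i) p) of None \<Rightarrow> None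
        | Some y1 \<Rightarrow> (case iw_run id (filter (\<lambda>j. i < j) p) of None \<Rightarrow> None
        | Some y2 \<Rightarrow> Some (y1 \<circ> y2)))"
        by (rule iw_split[OF nip inv2_id inv2_id]) (auto simp: lo_def hi_def)
      obtain y1 y2 where y1: "iw_run id (filter (\<lambda>j. j < i) p) = Some y1"
        and y2: "iw_run id (filter (\<lambda>j. i < j) p) = Some y2" and yz: "y1 \<circ> y2 = z"
        using sp z by (auto split: option.splits)
      have "lo i y1" using iw_lo[OF y1] by (auto simp: lo_def)
      moreover have "hi i y2" using iw_hi[OF y2] by (auto simp: hi_def)
      moreover have "inv2 y2" using iw_inv2[OF y2 inv2_id] .
      ultimately have yy: "y1 = ?g1 \<and> y2 = ?g2" using lohi_unique[OF _ _ lo1 hi2 _ i1(2)] yz ze by blast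
      have l1: "length (filter (\<lambda>j. j < i) p) < N" using lp by (meson le_less_trans length_filter_le)
      have l2: "length (filter (\<lambda>j. i < j) p) < N" using lp by (meson le_less_trans length_filter_le)
      have r1: "distinct (filter (\<lambda>j. j < i) p) \<and> set (filter (\<lambda>j. j < i) p) = {a..i-1}"
        using less.IH[OF l1 refl h(2)] y1 yy by (simp add: id_def)
      have r2: "distinct (filter (\<lambda>j. i < j) p) \<and> set (filter (\<lambda>j. i < j) p) = {i+1..c-1}"
        using less.IH[OF l2 refl h(3)] y2 yy by (simp add: id_def)
      have dp: "distinct p" using dist_split nip r1 r2 by blast
      have sp: "set p = {a..i-1} \<union> {i+1..c-1}"
      proof -
        have "set p = set (filter (\<lambda>j. j < i) p) \<union> set (filter (\<lambda>j. i < j) p)"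
          using nip by (auto simp: linorder_neq_iff) (metis linorder_neqE)
        then show ?thesis using r1 r2 by simp
      qed
      show ?thesis using snoc dp nip sp ai by auto
    qed
  qed
qed

lemma fwd_main:
  "length w = N \<Longrightarrow> distinct w \<Longrightarrow> set w = {a..c-1} \<Longrightarrow> a < c \<Longrightarrow>
   \<exists>is. v a is c \<and> iw_run id w = Some (gch a is c)"
proof (induction N arbitrary: w a c rule: less_induct)
  case (less N)
  show ?case
  proof (cases w rule: rev_cases)
    case Nil
    then show ?thesis using less.prems by auto
  next
    case (snoc p i)
    have lp: "length p < N" using snoc less.prems(1) by simp
    have nip: "i \<notin> set p" and dp: "distinct p" using less.prems(2) snoc by auto
    have ai: "a \<le> i" "i \<le> c - 1" using less.prems(3) snoc by auto
    have setp: "set p = {a..c-1} - {i}" using less.prems(3) snoc nip by auto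
    let ?f1 = "filter (\<lambda>j. j < i) p" and ?f2 = "filter (\<lambda>j. i < j) p"
    have s1: "set ?f1 = {a..i-1}"
    proof -
      have "set ?f1 = {x \<in> set p. x < i}" by simp
      also have "\<dots> = {a..i-1}" unfolding setp using ai by auto
      finally show ?thesis .
    qed
    have s2: "set ?f2 = {i+1..c-1}"
    proof -
      have "set ?f2 = {x \<in> set p. i < x}" by simp
      also have "\<dots> = {i+1..c-1}" unfolding setp using ai by auto
      finally show ?thesis .
    qed
    have l1: "length ?f1 < N" using lp by (meson le_less_trans length_filter_le)
    have l2: "length ?f2 < N" using lp by (meson le_less_trans length_filter_le)
    obtain y1 where y1: "iw_run id ?f1 = Some y1"
      and y1c: "(a = i \<and> y1 = id) \<or> (a < i \<and> (\<exists>is1. v a is1 i \<and> y1 = gch a is1 i))"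
    proof (cases "a < i")
      case True
      obtain is1 where "v a is1 i" "iw_run id ?f1 = Some (gch a is1 i)"
        using less.IH[OF l1 refl _ _ True] dp s1 by (auto simp: id_def)
      then show ?thesis using that True by blast
    next
      case False
      then have "?f1 = []" using s1 ai by (metis atLeastatMost_empty_iff set_empty zle_diff1_eq)
      then show ?thesis using that False ai by auto
    qed
    obtain y2 where y2: "iw_run id ?f2 = Some y2"
      and y2c: "(i + 1 = c \<and> y2 = id) \<or> (i + 1 < c \<and> (\<exists>is2. v (i + 1) is2 c \<and> y2 = gch (i + 1) is2 c))"
    proof (cases "i + 1 < c")
      case True
      obtain is2 where "v (i + 1) is2 c" "iw_run id ?f2 = Some (gch (i + 1) is2 c)"
        using less.IH[OF l2 refl _ _ True] dp s2 by (auto simp: id_def)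
      then show ?thesis using that True by blast
    next
      case False
      then have "?f2 = []" using s2 ai by auto
      then show ?thesis using that False ai by auto
    qed
    have sp: "iw_run (id \<circ> id) p = (case iw_run id ?f1 of None \<Rightarrow> None
        | Some y1 \<Rightarrow> (case iw_run id ?f2 of None \<Rightarrow> None
        | Some y2 \<Rightarrow> Some (y1 \<circ> y2)))"
      by (rule iw_split[OF nip inv2_id inv2_id]) (auto simp: lo_def hi_def)
    then have rp: "iw_run id p = Some (y1 \<circ> y2)" using y1 y2 by simp
    have ws: "iw_run id w = (if (y1 \<circ> y2) i > (y1 \<circ> y2) (i + 1) then None else Some (rtimes (y1 \<circ> y2) i))"
      unfolding snoc iw_snoc rp by simp
    from y1c y2c show ?thesis
    proof (elim disjE conjE exE)
      assume h: "a = i" "y1 = id" "i + 1 = c" "y2 = id"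
      have "iw_run id w = Some (gch a [] c)" using ws rt_id h by simp
      then show ?thesis using h by (intro exI[of _ "[]"]) (simp add: id_def)
    next
      fix is2 assume h: "a = i" "y1 = id" "i + 1 < c" "v (i + 1) is2 c" "y2 = gch (i + 1) is2 c"
      have "v a is2 c" using h v_mono_start by auto
      moreover have "iw_run id w = Some (gch a is2 c)" using ws FL[OF h(4)] h by simp
      ultimately show ?thesis by (intro exI[of _ is2]) (simp add: id_def)
    next
      fix is1 assume h: "a < i" "v a is1 i" "y1 = gch a is1 i" "i + 1 = c" "y2 = id"
      have "v a is1 c" using h v_mono_end by auto
      moreover have "iw_run id w = Some (gch a is1 c)" using ws FR[OF h(2)] h by simp
      ultimately show ?thesis by (intro exI[of _ is1]) (simp add: id_def)
    next
      fix is1 is2 assume h: "a < i" "v a is1 i" "y1 = gch a is1 i" "i + 1 < c" "v (i + 1) is2 c" "y2 = gch (i + 1) is2 c"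
      have "iw_run id w = Some (gch a (is1 @ (i + 1) # is2) c)" using ws FM[OF h(2) h(5)] h by simp
      then show ?thesis using v_merge[OF h(2) h(5)]
        by (intro exI[of _ "is1 @ (i + 1) # is2"]) (simp add: id_def)
    qed
  qed
qed

lemma foldr_s_gen: "foldr (\<lambda>k f. s (2 * k) \<circ> f) xs g = foldr (\<lambda>k f. s (2 * k) \<circ> f) xs id \<circ> g"
  by (induction xs) (auto simp: comp_assoc)

lemma tau_suc: "tau (Suc m) = tau m \<circ> s (2 * (int m + 1))"
proof -
  have "[1..int (Suc m)] = [1..int m] @ [int m + 1]"
    using upto_rec2[of 1 "int m + 1"] by (simp add: add.commute)
  then show ?thesis unfolding tau_def using foldr_s_gen by simp
qed

lemma tau_val: "tau m x = (if 2 \<le> x \<and> x \<le> 2 * int m + 1 then (if even x then x + 1 else x - 1) else x)"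
proof (induction m arbitrary: x)
  case 0 then show ?case by (simp add: tau_def)
next
  case (Suc m)
  show ?case unfolding tau_suc by (simp add: Suc s_apply) presburger
qed

definition Ev :: "nat \<Rightarrow> int set" where "Ev m = {x. even x \<and> 2 \<le> x \<and> x \<le> 2 * int m}"

lemma Ev_img: "(\<lambda>k. 2 * k) ` {1..int m} = Ev m"
  unfolding Ev_def by (auto elim!: evenE)

lemma tau_lo: "lo (2 * int m + 1) (tau m)" unfolding lo_def by (simp add: tau_val)
lemma tau_inv2: "inv2 (tau m)" unfolding inv2_def by (simp add: tau_val) presburger

lemma s_gch: "s a = gch a [] (a + 1)" by (simp add: s_def)

lemma split_id: "i \<notin> set p \<Longrightarrow> iw_run id p = (case iw_run id (filter (\<lambda>j. j < i) p) of None \<Rightarrow> None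
        | Some y1 \<Rightarrow> (case iw_run id (filter (\<lambda>j. i < j) p) of None \<Rightarrow> None
        | Some y2 \<Rightarrow> Some (y1 \<circ> y2)))"
  using iw_split[of i p id id] inv2_id by (simp add: lo_def hi_def)

lemma v_single: "v a is (a + 1) \<Longrightarrow> is = []"
proof (cases "is")
  case (Cons j r)
  assume "v a is (a + 1)"
  then have "a + 2 \<le> j" "j < a + 1" using Cons v_lt[of j r "a + 1"] by auto
  then show ?thesis by simp
qed simp

lemma tau_words: "iw_run id w = Some (tau m) \<longleftrightarrow> distinct w \<and> set w = Ev m"
proof (induction m arbitrary: w)
  case 0
  have t0: "tau 0 = id" by (simp add: fun_eq_iff tau_val)
  have e0: "Ev 0 = {}" by (auto simp: Ev_def)
  show ?case
  proof
    assume "iw_run id w = Some (tau 0)"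
    then have "iw_run id w = Some id" by (simp only: t0)
    then have "w = []" by (rule iw_id_nil)
    then show "distinct w \<and> set w = Ev 0" using e0 by simp
  next
    assume "distinct w \<and> set w = Ev 0"
    then have "w = []" using e0 by simp
    then show "iw_run id w = Some (tau 0)" using t0 by simp
  qed
next
  case (Suc m)
  define M where "M = int m + 1"
  define i where "i = 2 * int m + 1"
  let ?t2 = "gch (2 * M) [] (2 * M + 1)"
  have vt: "v (2 * M) [] (2 * M + 1)" by simp
  have ts: "tau (Suc m) = tau m \<circ> ?t2" unfolding tau_suc M_def by (simp add: s_gch)
  have lo1: "lo i (tau m)" using tau_lo i_def by simp
  have hi2: "hi i ?t2" using g_hi[OF vt] i_def M_def by simp
  have i1: "inv2 (tau m)" "inv2 ?t2" using tau_inv2 g_inv2[OF vt] by auto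
  have EvS: "Ev (Suc m) = Ev m \<union> {2 * M}" unfolding Ev_def M_def by auto
  let ?f1 = "filter (\<lambda>j. j < i) w" and ?f2 = "filter (\<lambda>j. i < j) w"
  show ?case
  proof
    assume z: "iw_run id w = Some (tau (Suc m))"
    have nip: "i \<notin> set w"
    proof
      assume "i \<in> set w"
      then have "mix i (tau (Suc m))" using iw_mix[OF z inv2_id] by auto
      then obtain x where "x \<le> i" "tau (Suc m) x > i" unfolding mix_def by auto
      moreover have "?t2 x = x" using hi2 \<open>x \<le> i\<close> unfolding hi_def by auto
      ultimately show False using lo_maps[OF i1(1) lo1 \<open>x \<le> i\<close>] ts by simp
    qed
    obtain y1 y2 where y1: "iw_run id ?f1 = Some y1" and y2: "iw_run id ?f2 = Some y2" and yz: "y1 \<circ> y2 = tau (Suc m)"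
      using split_id[OF nip] z by (auto split: option.splits)
    have "lo i y1" using iw_lo[OF y1] by (auto simp: lo_def)
    moreover have "hi i y2" using iw_hi[OF y2] by (auto simp: hi_def)
    moreover have "inv2 y2" using iw_inv2[OF y2 inv2_id] .
    moreover have "y1 \<circ> y2 = tau m \<circ> ?t2" by (simp only: yz ts)
    ultimately have yy: "y1 = tau m \<and> y2 = ?t2" using lohi_unique[OF _ _ lo1 hi2 _ i1(2)] by blast
    have r1: "distinct ?f1 \<and> set ?f1 = Ev m" using Suc.IH y1 yy by (simp add: id_def)
    have r2: "distinct ?f2 \<and> set ?f2 = {2 * M..2 * M + 1 - 1}" using back_main[OF refl vt, of ?f2] y2 yy by simp
    have dw: "distinct w" using dist_split nip r1 r2 by blast
    have "set w = set ?f1 \<union> set ?f2" using nip by (auto simp: linorder_neq_iff) (metis linorder_neqE)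
    then have "set w = Ev (Suc m)" using r1 r2 EvS by simp
    then show "distinct w \<and> set w = Ev (Suc m)" using dw by simp
  next
    assume h: "distinct w \<and> set w = Ev (Suc m)"
    have nip: "i \<notin> set w" using h unfolding Ev_def i_def by auto
    have s1: "set ?f1 = Ev m"
    proof -
      have "set ?f1 = {x \<in> set w. x < i}" by simp
      also have "\<dots> = Ev m" unfolding h[THEN conjunct2] Ev_def i_def by auto
      finally show ?thesis .
    qed
    have s2: "set ?f2 = {2 * M..2 * M + 1 - 1}"
    proof -
      have "set ?f2 = {x \<in> set w. i < x}" by simp
      also have "\<dots> = {2 * M..2 * M + 1 - 1}" unfolding h[THEN conjunct2] Ev_def i_def M_def by (auto; presburger)
      finally show ?thesis .
    qed
    have y1: "iw_run id ?f1 = Some (tau m)" using Suc.IH h s1 by (simp add: id_def)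
    obtain is2 where "v (2 * M) is2 (2 * M + 1)" and y2': "iw_run id ?f2 = Some (gch (2 * M) is2 (2 * M + 1))"
      using fwd_main[OF refl _ s2] h by auto
    then have "is2 = []" using v_single by blast
    then have y2: "iw_run id ?f2 = Some ?t2" using y2' by simp
    show "iw_run id w = Some (tau (Suc m))" unfolding split_id[OF nip] y1 y2 ts by simp
  qed
qed

definition prodr :: "int list \<Rightarrow> int \<Rightarrow> int" where "prodr b = foldr (\<lambda>i f. s i \<circ> f) b id"
definition prodl :: "int list \<Rightarrow> int \<Rightarrow> int" where "prodl b = foldl (\<lambda>f i. s i \<circ> f) id b"

lemma foldr_gen: "foldr (\<lambda>i f. s i \<circ> f) b (g :: int \<Rightarrow> int) = foldr (\<lambda>i f. s i \<circ> f) b id \<circ> g"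
  by (induction b) (auto simp: comp_assoc)
lemma foldl_gen: "foldl (\<lambda>f i. s i \<circ> f) (g :: int \<Rightarrow> int) b = foldl (\<lambda>f i. s i \<circ> f) id b \<circ> g"
proof (induction b arbitrary: g)
  case (Cons j b)
  show ?case using Cons.IH[of "s j \<circ> g"] Cons.IH[of "s j"] by (simp add: comp_assoc)
qed simp

lemma fpf_snoc: "fpf_act (b @ [i]) = s i \<circ> fpf_act b \<circ> s i"
  unfolding fpf_act_def by simp

lemma fpf_prod: "fpf_act b = prodl b \<circ> one_fpf \<circ> prodr b"
proof (induction b rule: rev_induct)
  case Nil then show ?case by (simp add: fpf_act_def prodl_def prodr_def)
next
  case (snoc i b)
  have r: "prodr (b @ [i]) = prodr b \<circ> s i" unfolding prodr_def using foldr_gen[of b "s i"] by simp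
  have l: "prodl (b @ [i]) = s i \<circ> prodl b" unfolding prodl_def by simp
  show ?case unfolding fpf_snoc snoc r l by (simp add: comp_assoc)
qed

definition tauE :: "int set \<Rightarrow> int \<Rightarrow> int" where
  "tauE S x = (if x \<in> S then x + 1 else if x - 1 \<in> S then x - 1 else x)"

lemma tauE_l: assumes "j \<notin> S" "even j" "\<forall>y\<in>S. even y"
  shows "s j (tauE S x) = tauE (insert j S) x"
proof -
  have a: "x \<in> S \<Longrightarrow> x + 1 \<noteq> j \<and> x \<noteq> j" using assms by auto
  have b: "x - 1 \<in> S \<Longrightarrow> x - 1 \<noteq> j \<and> x - 1 \<noteq> j + 1 \<and> x \<notin> S"
  proof -
    assume xs: "x - 1 \<in> S"
    then have e: "even (x - 1)" using assms by auto
    have "x \<notin> S"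
    proof
      assume "x \<in> S" then have "even x" using assms by auto
      then show False using e by presburger
    qed
    moreover have "x - 1 \<noteq> j + 1" using e assms(2) by presburger
    ultimately show ?thesis using xs assms by auto
  qed
  have c: "x \<in> S \<Longrightarrow> x + 1 \<noteq> j + 1" using assms by auto
  show ?thesis unfolding tauE_def using a b c assms by (auto simp: s_apply)
qed

lemma tauE_r: assumes "j \<notin> S" "even j" "\<forall>y\<in>S. even y"
  shows "tauE S (s j x) = tauE (insert j S) x"
proof -
  have ev: "\<And>y. y \<in> S \<Longrightarrow> y \<noteq> j + 1 \<and> y + 1 \<noteq> j \<and> y \<noteq> j - 1" using assms by (metis add_diff_cancel_right' even_add odd_one diff_add_cancel)
  show ?thesis unfolding tauE_def using ev assms by (auto simp: s_apply)
qed

lemma prodr_even: "distinct b \<Longrightarrow> \<forall>j\<in>set b. even j \<Longrightarrow> prodr b = tauE (set b)"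
proof (induction b)
  case Nil then show ?case by (simp add: prodr_def tauE_def fun_eq_iff)
next
  case (Cons j b)
  have "prodr (j # b) = s j \<circ> prodr b" by (simp add: prodr_def)
  then show ?case using Cons tauE_l[of j "set b"] by (auto simp: fun_eq_iff)
qed

lemma prodl_even: "distinct b \<Longrightarrow> \<forall>j\<in>set b. even j \<Longrightarrow> prodl b = tauE (set b)"
proof (induction b)
  case Nil then show ?case by (simp add: prodl_def tauE_def fun_eq_iff)
next
  case (Cons j b)
  have "prodl (j # b) = prodl b \<circ> s j" unfolding prodl_def using foldl_gen[of "s j" b] by simp
  then show ?case using Cons tauE_r[of j "set b"] by (auto simp: fun_eq_iff)
qed

lemma tauE_Ev: "tauE (Ev m) = tau m"
  by (auto simp: fun_eq_iff tauE_def Ev_def tau_val; presburger)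

lemma fpf_even: "distinct b \<Longrightarrow> set b = Ev m \<Longrightarrow> fpf_act b = tau m \<circ> one_fpf \<circ> tau m"
proof -
  assume a: "distinct b" "set b = Ev m"
  then have "\<forall>j\<in>set b. even j" by (auto simp: Ev_def)
  then show ?thesis using a fpf_prod prodl_even prodr_even tauE_Ev by metis
qed

lemma fpf_letter: "even j \<Longrightarrow> j \<notin> set b \<Longrightarrow> x \<le> j \<Longrightarrow> fpf_act b x \<le> j"
proof (induction b arbitrary: x rule: rev_induct)
  case Nil then show ?case by (auto simp: fpf_act_def one_fpf_def; presburger)
next
  case (snoc i b)
  have ij: "i \<noteq> j" using snoc by auto
  have "s i x \<le> j" using snoc.prems ij by (auto simp: s_apply)
  then have "fpf_act b (s i x) \<le> j" using snoc by auto
  then show ?case unfolding fpf_snoc using ij by (auto simp: s_apply)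
qed

lemma Ev_sub: assumes "fpf_act b = tau m \<circ> one_fpf \<circ> tau m" shows "Ev m \<subseteq> set b"
proof
  fix j assume j: "j \<in> Ev m"
  show "j \<in> set b"
  proof (rule ccontr)
    assume "j \<notin> set b"
    then have "fpf_act b j \<le> j" using fpf_letter j by (auto simp: Ev_def)
    moreover have "(tau m \<circ> one_fpf \<circ> tau m) j > j" using j by (auto simp: Ev_def tau_val one_fpf_def; presburger)
    ultimately show False using assms by simp
  qed
qed

lemma Ev_finite: "finite (Ev m)"
proof -
  have "Ev m \<subseteq> {2..2 * int m}" by (auto simp: Ev_def)
  then show ?thesis using finite_subset by blast
qed

lemma Ev_card: "card (Ev m) = m"
proof -
  have "card ((\<lambda>k. 2 * k) ` {1..int m}) = card {1..int m}" by (rule card_image) (auto simp: inj_on_def)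
  then show ?thesis unfolding Ev_img by simp
qed

definition evw :: "nat \<Rightarrow> int list" where "evw m = map (\<lambda>k. 2 * k) [1..int m]"

lemma evw_props: "distinct (evw m) \<and> set (evw m) = Ev m \<and> length (evw m) = m"
  unfolding evw_def using Ev_img by (auto simp: distinct_map inj_on_def)

lemma fpf_words: "is_fpf_word (tau m \<circ> one_fpf \<circ> tau m) c \<longleftrightarrow> distinct c \<and> set c = Ev m"
proof
  assume h: "is_fpf_word (tau m \<circ> one_fpf \<circ> tau m) c"
  then have sub: "Ev m \<subseteq> set c" using Ev_sub unfolding is_fpf_word_def by blast
  have "length c \<le> m" using h evw_props fpf_even[of "evw m" m] unfolding is_fpf_word_def by metis
  moreover have "m \<le> card (set c)" using card_mono[OF _ sub] Ev_card by simp
  moreover have "card (set c) \<le> length c" by (rule card_length)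
  ultimately have e: "card (set c) = length c" "card (set c) = card (Ev m)" using Ev_card by auto
  have "distinct c" using e(1) card_distinct by blast
  moreover have "set c = Ev m" using card_subset_eq[OF _ sub] e(2) by (metis Ev_finite card_seteq finite_set sub order_refl)
  ultimately show "distinct c \<and> set c = Ev m" by simp
next
  assume h: "distinct c \<and> set c = Ev m"
  have "fpf_act c = tau m \<circ> one_fpf \<circ> tau m" using fpf_even h by blast
  moreover have "\<forall>b. fpf_act b = tau m \<circ> one_fpf \<circ> tau m \<longrightarrow> length c \<le> length b"
  proof (intro allI impI)
    fix b assume "fpf_act b = tau m \<circ> one_fpf \<circ> tau m"
    then have "Ev m \<subseteq> set b" by (rule Ev_sub)
    then have "card (Ev m) \<le> card (set b)" by (rule card_mono[OF finite_set])
    then show "length c \<le> length b" using h distinct_card[of c] card_length[of b] by simp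
  qed
  ultimately show "is_fpf_word (tau m \<circ> one_fpf \<circ> tau m) c" unfolding is_fpf_word_def by simp
qed

lemma zip_gch: "foldr (\<lambda>(a, b) f. transp a b \<circ> f) (zip (a # map (\<lambda>i. i - 1) is) (is @ [c])) id = gch a is c"
  by (induction "is" arbitrary: a) auto

lemma chain_gch: "chain_perm is M = gch 1 is M"
  unfolding chain_perm_def using zip_gch by simp

lemma sorted_v: "sorted_wrt (<) (a # concat (map (\<lambda>i. [i - 1, i]) is) @ [c]) \<longleftrightarrow> v a is c"
proof (induction "is" arbitrary: a)
  case Nil then show ?case by simp
next
  case (Cons j r)
  have "sorted_wrt (<) (a # concat (map (\<lambda>i. [i - 1, i]) (j # r)) @ [c])
     = sorted_wrt (<) (a # (j - 1) # j # (concat (map (\<lambda>i. [i - 1, i]) r) @ [c]))" by simp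
  also have "\<dots> = (a < j - 1 \<and> j - 1 < j \<and> sorted_wrt (<) (j # (concat (map (\<lambda>i. [i - 1, i]) r) @ [c])))"
    by (simp only: sorted_wrt2[OF transp_on_less])
  also have "\<dots> = (a < j - 1 \<and> j - 1 < j \<and> v j r c)" by (simp only: Cons.IH)
  also have "\<dots> = v a (j # r) c" by auto
  finally show ?case .
qed

lemma Sigma_char: "\<sigma> \<in> Sigma_set M \<longleftrightarrow> \<sigma> = transp 1 M \<or> (\<exists>is. v 1 is M \<and> \<sigma> = gch 1 is M)"
proof
  assume "\<sigma> \<in> Sigma_set M"
  then have "\<sigma> = transp 1 M \<or> (\<exists>is. \<sigma> = chain_perm is M \<and> is \<noteq> [] \<and>
        sorted_wrt (<) (1 # concat (map (\<lambda>i. [i - 1, i]) is) @ [M]))" unfolding Sigma_set_def by blast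
  then show "\<sigma> = transp 1 M \<or> (\<exists>is. v 1 is M \<and> \<sigma> = gch 1 is M)"
  proof
    assume "\<exists>is. \<sigma> = chain_perm is M \<and> is \<noteq> [] \<and> sorted_wrt (<) (1 # concat (map (\<lambda>i. [i - 1, i]) is) @ [M])"
    then obtain "is" where "\<sigma> = chain_perm is M" "sorted_wrt (<) (1 # concat (map (\<lambda>i. [i - 1, i]) is) @ [M])" by blast
    then have "v 1 is M \<and> \<sigma> = gch 1 is M" unfolding sorted_v chain_gch by simp
    then show ?thesis by blast
  qed simp
next
  assume h: "\<sigma> = transp 1 M \<or> (\<exists>is. v 1 is M \<and> \<sigma> = gch 1 is M)"
  show "\<sigma> \<in> Sigma_set M"
  proof (cases "\<sigma> = transp 1 M")
    case True then show ?thesis unfolding Sigma_set_def by simp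
  next
    case False
    then obtain "is" where i: "v 1 is M" "\<sigma> = gch 1 is M" using h by auto
    then have "is \<noteq> []" using False by auto
    have "sorted_wrt (<) (1 # concat (map (\<lambda>i. [i - 1, i]) is) @ [M])" unfolding sorted_v by (rule i(1))
    moreover have "\<sigma> = chain_perm is M" unfolding chain_gch by (rule i(2))
    ultimately show ?thesis unfolding Sigma_set_def using \<open>is \<noteq> []\<close> by blast
  qed
qed

lemma perm_iff: "(distinct w \<and> set w = {1..int m}) \<longleftrightarrow> (\<exists>\<sigma>\<in>Sigma_set (int m + 1). iw_run id w = Some \<sigma>)"
proof
  assume h: "distinct w \<and> set w = {1..int m}"
  show "\<exists>\<sigma>\<in>Sigma_set (int m + 1). iw_run id w = Some \<sigma>"
  proof (cases "m = 0")
    case True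
    then have "w = []" using h by simp
    moreover have "id \<in> Sigma_set (int m + 1)" using True transp_same unfolding Sigma_char by simp
    ultimately show ?thesis by auto
  next
    case False
    obtain "is" where "v 1 is (int m + 1)" "iw_run id w = Some (gch 1 is (int m + 1))"
      using fwd_main[OF refl, of w 1 "int m + 1"] h False by auto
    moreover then have "gch 1 is (int m + 1) \<in> Sigma_set (int m + 1)" using Sigma_char by blast
    ultimately show ?thesis by blast
  qed
next
  assume "\<exists>\<sigma>\<in>Sigma_set (int m + 1). iw_run id w = Some \<sigma>"
  then obtain \<sigma> where sm: "\<sigma> \<in> Sigma_set (int m + 1)" and r: "iw_run id w = Some \<sigma>" by blast
  have s1: "\<sigma> = transp 1 (int m + 1) \<or> (\<exists>is. v 1 is (int m + 1) \<and> \<sigma> = gch 1 is (int m + 1))"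
    using sm unfolding Sigma_char .
  show "distinct w \<and> set w = {1..int m}"
  proof (cases "m = 0 \<and> \<sigma> = transp 1 (int m + 1)")
    case True
    then have "iw_run id w = Some id" using r transp_same by simp
    then have "w = []" by (rule iw_id_nil)
    then show ?thesis using True by simp
  next
    case False
    obtain "is" where "v 1 is (int m + 1)" "\<sigma> = gch 1 is (int m + 1)"
    proof (cases "\<sigma> = transp 1 (int m + 1)")
      case True
      then have "m \<noteq> 0" using False by simp
      then have "v 1 [] (int m + 1)" by simp
      then show ?thesis using that[of "[]"] True by simp
    next
      case False
      then show ?thesis using s1 that by blast
    qed
    then show ?thesis using back_main[OF refl, of 1 "is" "int m + 1" w] r by simp
  qed
qed

lemma pi_m0: assumes "\<pi> \<in> fpf_invols" "pi_cond 1 \<pi>" shows False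
proof -
  obtain w where w: "fin_perm w" "\<pi> = w \<circ> one_fpf \<circ> inv w" using assms(1) unfolding fpf_invols_def by auto
  have b: "bij w" using w(1) unfolding fin_perm_def by auto
  have oo: "\<And>y. one_fpf (one_fpf y) = y" by (auto simp: one_fpf_def)
  have i1: "\<And>y. inv w (w y) = y" using b bij_is_inj inv_f_f by metis
  have i2: "\<And>y. w (inv w y) = y" using b bij_is_surj surj_f_inv_f by metis
  have "\<pi> (\<pi> x) = x" for x using w(2) oo i1 i2 by simp
  moreover have "\<pi> 1 = 3" "\<pi> 3 = 4" using assms(2) unfolding pi_cond_def by (auto simp: one_fpf_def)
  ultimately show False by (metis numeral_eq_one_iff semiring_norm(85) zero_neq_numeral)
qed

lemma pi_val: assumes "pi_cond (int m + 1) \<pi>" "m \<ge> 1" shows "\<pi> = tau m \<circ> one_fpf \<circ> tau m"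
proof
  fix x
  let ?M = "int m + 1"
  have P: "\<forall>i. i \<notin> {1..2 * ?M} \<longrightarrow> \<pi> i = one_fpf i"
    "\<forall>i \<in> {1..2 * ?M}. i \<in> {1, 2 * ?M - 2} \<longrightarrow> \<pi> i = i + 2"
    "\<forall>i \<in> {1..2 * ?M}. i \<in> {3, 2 * ?M} \<longrightarrow> \<pi> i = i - 2"
    "\<forall>i. even i \<and> 1 < i \<and> i < 2 * ?M - 2 \<longrightarrow> \<pi> i = i + 3"
    "\<forall>i. odd i \<and> 3 < i \<and> i < 2 * ?M \<longrightarrow> \<pi> i = i - 3"
    using assms(1) unfolding pi_cond_def by blast+
  have m1: "int m \<ge> 1" using assms(2) by simp
  have cs: "(x < 1 \<or> x > 2 * ?M) \<or> x = 1 \<or> x = 2 * ?M - 2 \<or> x = 3 \<or> x = 2 * ?M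
    \<or> (even x \<and> 1 < x \<and> x < 2 * ?M - 2) \<or> (odd x \<and> 3 < x \<and> x < 2 * ?M)" by presburger
  consider "x < 1 \<or> x > 2 * ?M" | "x = 1" | "x = 2 * ?M - 2" | "x = 3" | "x = 2 * ?M"
    | "even x \<and> 1 < x \<and> x < 2 * ?M - 2" | "odd x \<and> 3 < x \<and> x < 2 * ?M" using cs by blast
  then show "\<pi> x = (tau m \<circ> one_fpf \<circ> tau m) x"
  proof cases
    case 1 then have "\<pi> x = one_fpf x" using P(1) by auto
    then show ?thesis using 1 by (simp add: tau_val one_fpf_def; presburger)
  next
    case 2 then have "\<pi> x = x + 2" using P(2) m1 by auto
    then show ?thesis using 2 m1 by (simp add: tau_val one_fpf_def)
  next
    case 3 then have "\<pi> x = x + 2" using P(2) m1 by auto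
    then show ?thesis using 3 m1 by (simp add: tau_val one_fpf_def)
  next
    case 4 then have "\<pi> x = x - 2" using P(3) m1 by auto
    then show ?thesis using 4 m1 by (simp add: tau_val one_fpf_def)
  next
    case 5 then have "\<pi> x = x - 2" using P(3) m1 by auto
    then show ?thesis using 5 m1 by (simp add: tau_val one_fpf_def)
  next
    case 6 then have "\<pi> x = x + 3" using P(4) by auto
    then show ?thesis using 6 m1 by (simp add: tau_val one_fpf_def; presburger)
  next
    case 7 then have "\<pi> x = x - 3" using P(5) by auto
    then show ?thesis using 7 m1 by (simp add: tau_val one_fpf_def; presburger)
  qed
qed

lemma insort_front: "(\<forall>z\<in>set w. y < z) \<Longrightarrow> insort y w = y # w"
  by (cases w) auto

lemma crystal: assumes "n \<ge> 2" "ws \<in> RO n (tau m)"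
  shows "fbar1_O ws = fbar1_Sp ws \<and> ebar1_O ws = ebar1_Sp ws"
proof -
  have inc: "incr_fact n ws" and iw: "iw_run id (concat ws) = Some (tau m)"
    using assms(2) unfolding RO_def is_inv_word_def by auto
  have ev: "\<forall>x \<in> set (concat ws). even x" using iw tau_words unfolding Ev_def by auto
  have len: "length ws = n" using inc unfolding incr_fact_def by simp
  have m0: "ws ! 0 \<in> set ws" "ws ! 1 \<in> set ws" using len assms(1) by auto
  have so: "sorted_wrt (<) (ws ! 0)" "sorted_wrt (<) (ws ! 1)" using m0 inc unfolding incr_fact_def by auto
  have ev1: "\<forall>x\<in>set (ws ! 0). even x" "\<forall>x\<in>set (ws ! 1). even x" using ev m0 by auto
  have f: "fbar1_O ws = fbar1_Sp ws"
  proof (cases "ws ! 0")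
    case Nil then show ?thesis unfolding fbar1_O_def fbar1_Sp_def Let_def by simp
  next
    case (Cons x r)
    have nx: "x + 1 \<notin> set (ws ! 0)" using ev1(1) Cons by auto
    have "(\<forall>y\<in>set (ws ! 1). x < y) \<longleftrightarrow> \<not> (ws ! 1 \<noteq> [] \<and> hd (ws ! 1) \<le> x)"
      using so(2) by (cases "ws ! 1") auto
    then show ?thesis unfolding fbar1_O_def fbar1_Sp_def Let_def using Cons nx by auto
  qed
  have e: "ebar1_O ws = ebar1_Sp ws"
  proof (cases "ws ! 1")
    case Nil then show ?thesis unfolding ebar1_O_def ebar1_Sp_def Let_def by simp
  next
    case (Cons y r)
    have ey: "even y" using ev1(2) Cons by auto
    have c: "(\<forall>z\<in>set (ws ! 0). y < z) \<longleftrightarrow> \<not> (ws ! 0 \<noteq> [] \<and> hd (ws ! 0) \<le> y)"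
      using so(1) by (cases "ws ! 0") auto
    show ?thesis unfolding ebar1_O_def ebar1_Sp_def Let_def using Cons ey c insort_front[of "ws ! 0" y] by auto
  qed
  show ?thesis using f e by simp
qed

theorem proposition5p1:
  fixes m n :: nat and \<pi> :: "int \<Rightarrow> int"
  assumes "n \<ge> 1"
    and "\<pi> \<in> fpf_invols" and "pi_cond (int m + 1) \<pi>"
  shows "PermN n m = (\<Union>\<sigma> \<in> Sigma_set (int m + 1). RO n \<sigma>)
       \<and> (\<forall>\<sigma>1 \<in> Sigma_set (int m + 1). \<forall>\<sigma>2 \<in> Sigma_set (int m + 1).
            \<sigma>1 \<noteq> \<sigma>2 \<longrightarrow> RO n \<sigma>1 \<inter> RO n \<sigma>2 = {})
       \<and> EvenN n m = RO n (tau m)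
       \<and> RO n (tau m) = RSp n \<pi>
       \<and> (n \<ge> 2 \<longrightarrow> (\<forall>ws \<in> RO n (tau m).
            fbar1_O ws = fbar1_Sp ws \<and> ebar1_O ws = ebar1_Sp ws))"
proof -
  have p1: "PermN n m = (\<Union>\<sigma> \<in> Sigma_set (int m + 1). RO n \<sigma>)"
  proof (rule set_eqI)
    fix ws
    have "ws \<in> PermN n m \<longleftrightarrow> incr_fact n ws \<and> (\<exists>\<sigma>\<in>Sigma_set (int m + 1). iw_run id (concat ws) = Some \<sigma>)"
      unfolding PermN_def using perm_iff[of "concat ws" m] by auto
    then show "ws \<in> PermN n m \<longleftrightarrow> ws \<in> (\<Union>\<sigma> \<in> Sigma_set (int m + 1). RO n \<sigma>)"
      unfolding RO_def is_inv_word_def by auto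
  qed
  have p2: "\<forall>\<sigma>1 \<in> Sigma_set (int m + 1). \<forall>\<sigma>2 \<in> Sigma_set (int m + 1).
            \<sigma>1 \<noteq> \<sigma>2 \<longrightarrow> RO n \<sigma>1 \<inter> RO n \<sigma>2 = {}"
    unfolding RO_def is_inv_word_def by auto
  have p3: "EvenN n m = RO n (tau m)"
    unfolding EvenN_def RO_def is_inv_word_def Ev_img using tau_words by auto
  have m1: "m \<ge> 1"
  proof (rule ccontr)
    assume "\<not> m \<ge> 1"
    then have "m = 0" by simp
    then have "pi_cond 1 \<pi>" using assms(3) by simp
    then show False using pi_m0 assms(2) by blast
  qed
  have pv: "\<pi> = tau m \<circ> one_fpf \<circ> tau m" using pi_val assms(3) m1 by blast
  have p4: "RO n (tau m) = RSp n \<pi>"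
    unfolding RO_def RSp_def is_inv_word_def pv fpf_words using tau_words by auto
  have p5: "n \<ge> 2 \<longrightarrow> (\<forall>ws \<in> RO n (tau m). fbar1_O ws = fbar1_Sp ws \<and> ebar1_O ws = ebar1_Sp ws)"
    using crystal by blast
  show ?thesis using p1 p2 p3 p4 p5 by blast
qed

end
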